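(* Let $g:\mathbb{R}^n\to\mathbb{R}\cup\{+\infty\}$ be a proper closed convex function and let $f=f_1-f_2$, where $f_1,f_2:\mathbb{R}^n\to\mathbb{R}$ are convex differentiable functions such that $\nabla f_1$ is Lipschitz continuous with modulus $L>0$, $\nabla f_2$ is Lipschitz continuous with modulus $l\ge 0$, and $L\ge l$. Let $F=f+g$, and assume $\inf F>-\infty$ and that this infimum is attained. Let $\{x^k\}$ be generated by Algorithm 1 (described in the context), let $\bar\beta=\sup_k\beta_k$, and let $\alpha\in\big[\tfrac{L+l}{2}\bar\beta^2,\tfrac L2\big]$. Then: (i) the sequence $\{H_{k,\alpha}\}$ is convergent; (ii) $\sum_{k=0}^\infty\big(\alpha-\tfrac{L+l}{2}\beta_{k+1}^2\big)\|x^{k+1}-x^k\|^2<\infty$.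
   Context: For a proper closed convex $h$, $\mathrm{Prox}_h(v)=\arg\min_{x\in\mathbb{R}^n}\{h(x)+\tfrac12\|x-v\|^2\}$. Algorithm 1 (proximal gradient algorithm with extrapolation): choose $x^0\in\operatorname{dom} g$ and $\{\beta_k\}\subseteq[0,\sqrt{L/(L+l)}]$, set $x^{-1}=x^0$, and for $k=0,1,2,\dots$ set $y^k=x^k+\beta_k(x^k-x^{k-1})$ and $x^{k+1}=\mathrm{Prox}_{\frac1L g}\big(y^k-\tfrac1L\nabla f(y^k)\big)$. For $\alpha\ge0$, $H_{k,\alpha}:=F(x^k)+\alpha\|x^k-x^{k-1}\|^2$. *)

theory Defs
  imports "HOL-Analysis.Analysis"
begin

definition epigraph_e :: "('a \<Rightarrow> ereal) \<Rightarrow> ('a \<times> real) set" where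
  "epigraph_e g = {(x, t). g x \<le> ereal t}"

definition proper_fun :: "('a \<Rightarrow> ereal) \<Rightarrow> bool" where
  "proper_fun g \<longleftrightarrow> (\<forall>x. g x \<noteq> -\<infinity>) \<and> (\<exists>x. g x < \<infinity>)"

definition closed_fun :: "('a::topological_space \<Rightarrow> ereal) \<Rightarrow> bool" where
  "closed_fun g \<longleftrightarrow> closed (epigraph_e g)"

definition convex_fun :: "('a::real_vector \<Rightarrow> ereal) \<Rightarrow> bool" where
  "convex_fun g \<longleftrightarrow> convex (epigraph_e g)"

definition prox :: "('a::real_normed_vector \<Rightarrow> ereal) \<Rightarrow> 'a \<Rightarrow> 'a" where
  "prox h v = (SOME x. \<forall>z. h x + ereal (1/2 * (norm (x - v))\<^sup>2) \<le> h z + ereal (1/2 * (norm (z - v))\<^sup>2))"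

end

theory Submission
  imports Defs
begin


lemma convex_grad_ineq:
  fixes f :: "'a::euclidean_space \<Rightarrow> real" and f' :: "'a \<Rightarrow> 'a"
  assumes cf: "convex_on UNIV f" and df: "\<And>z. (f has_derivative (\<lambda>h. f' z \<bullet> h)) (at z)"
  shows "f y + f' y \<bullet> (w - y) \<le> f w"
proof -
  define d where "d = w - y"
  define \<phi> where "\<phi> = (\<lambda>t::real. f (y + t *\<^sub>R d))"
  have cphi: "convex_on UNIV \<phi>"
    unfolding \<phi>_def
  proof (rule convex_onI)
    show "convex (UNIV::real set)" by simp
  next
    fix t a b :: real assume t0: "0 < t" "t < 1"
    then have t: "0 \<le> t \<and> t \<le> 1" by simp
    have "y + ((1 - t) *\<^sub>R a + t *\<^sub>R b) *\<^sub>R d = (1 - t) *\<^sub>R (y + a *\<^sub>R d) + t *\<^sub>R (y + b *\<^sub>R d)"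
      by (simp add: algebra_simps)
    then show "f (y + ((1 - t) *\<^sub>R a + t *\<^sub>R b) *\<^sub>R d) \<le> (1 - t) * f (y + a *\<^sub>R d) + t * f (y + b *\<^sub>R d)"
      using convex_onD[OF cf, of t "y + a *\<^sub>R d" "y + b *\<^sub>R d"] t by simp
  qed
  have "(\<phi> has_field_derivative (f' y \<bullet> d)) (at 0)"
  proof -
    have a: "((\<lambda>t. y + t *\<^sub>R d) has_derivative (\<lambda>h. h *\<^sub>R d)) (at (0::real))"
      by (auto intro!: derivative_eq_intros)
    have b: "(f has_derivative (\<lambda>h. f' y \<bullet> h)) (at (y + (0::real) *\<^sub>R d))" using df by simp
    have "((f \<circ> (\<lambda>t. y + t *\<^sub>R d)) has_derivative ((\<lambda>h. f' y \<bullet> h) \<circ> (\<lambda>h. h *\<^sub>R d))) (at 0)"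
      by (rule diff_chain_at[OF a b])
    moreover have "((\<lambda>h. f' y \<bullet> h) \<circ> (\<lambda>h. h *\<^sub>R d)) = (\<lambda>h. (f' y \<bullet> d) * h)"
      by (auto simp: fun_eq_iff)
    ultimately show ?thesis unfolding has_field_derivative_def \<phi>_def o_def by simp
  qed
  then have "(\<phi> has_field_derivative (f' y \<bullet> d)) (at 0 within UNIV)" by simp
  from convex_on_imp_above_tangent[OF cphi connected_UNIV _ _ this, of 1]
  have "\<phi> 1 - \<phi> 0 \<ge> f' y \<bullet> d" by simp
  then show ?thesis by (simp add: \<phi>_def d_def)
qed

lemma descent_lemma:
  fixes f :: "'a::euclidean_space \<Rightarrow> real" and f' :: "'a \<Rightarrow> 'a"
  assumes df: "\<And>z. (f has_derivative (\<lambda>h. f' z \<bullet> h)) (at z)"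
    and lip: "L-lipschitz_on UNIV f'"
  shows "f w \<le> f y + f' y \<bullet> (w - y) + L / 2 * (norm (w - y))\<^sup>2"
proof -
  define d where "d = w - y"
  define \<psi> where "\<psi> = (\<lambda>t::real. f (y + t *\<^sub>R d) - t * (f' y \<bullet> d) - L / 2 * t^2 * (norm d)^2)"
  have der: "(\<psi> has_field_derivative (f' (y + t *\<^sub>R d) \<bullet> d - f' y \<bullet> d - L * t * (norm d)^2)) (at t)" for t
  proof -
    have a: "((\<lambda>t. y + t *\<^sub>R d) has_derivative (\<lambda>h. h *\<^sub>R d)) (at (t::real))"
      by (auto intro!: derivative_eq_intros)
    have "((f \<circ> (\<lambda>t. y + t *\<^sub>R d)) has_derivative ((\<lambda>h. f' (y + t *\<^sub>R d) \<bullet> h) \<circ> (\<lambda>h. h *\<^sub>R d))) (at t)"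
      by (rule diff_chain_at[OF a df])
    moreover have "((\<lambda>h. f' (y + t *\<^sub>R d) \<bullet> h) \<circ> (\<lambda>h. h *\<^sub>R d)) = (\<lambda>h. (f' (y + t *\<^sub>R d) \<bullet> d) * h)"
      by (auto simp: fun_eq_iff)
    ultimately have "((\<lambda>t. f (y + t *\<^sub>R d)) has_field_derivative (f' (y + t *\<^sub>R d) \<bullet> d)) (at t)"
      unfolding has_field_derivative_def o_def by simp
    then show ?thesis unfolding \<psi>_def
      by (auto intro!: derivative_eq_intros)
  qed
  have L0: "L \<ge> 0" using lip by (auto simp: lipschitz_on_def)
  have neg: "f' (y + t *\<^sub>R d) \<bullet> d - f' y \<bullet> d - L * t * (norm d)^2 \<le> 0" if t: "0 \<le> t" for t
  proof -
    have "f' (y + t *\<^sub>R d) \<bullet> d - f' y \<bullet> d = (f' (y + t *\<^sub>R d) - f' y) \<bullet> d" by (simp add: inner_diff_left)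
    also have "\<dots> \<le> norm (f' (y + t *\<^sub>R d) - f' y) * norm d" by (rule norm_cauchy_schwarz)
    also have "norm (f' (y + t *\<^sub>R d) - f' y) \<le> L * norm (t *\<^sub>R d)"
      using lipschitz_onD[OF lip, of "y + t *\<^sub>R d" y] by (simp add: dist_norm)
    then have "norm (f' (y + t *\<^sub>R d) - f' y) * norm d \<le> L * norm (t *\<^sub>R d) * norm d"
      by (simp add: mult_right_mono)
    also have "\<dots> = L * t * (norm d)^2" using t by (simp add: power2_eq_square)
    finally show ?thesis by simp
  qed
  have "\<psi> 0 \<ge> \<psi> 1"
  proof (rule DERIV_nonpos_imp_nonincreasing[of 0 1])
    fix s :: real assume "0 \<le> s" "s \<le> 1"
    then show "\<exists>y. (\<psi> has_real_derivative y) (at s) \<and> y \<le> 0"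
      using der[of s] neg[of s] by blast
  qed simp
  then show ?thesis by (simp add: \<psi>_def d_def)
qed



lemma proper_closed_lb:
  fixes g :: "'a::euclidean_space \<Rightarrow> ereal"
  assumes pg: "proper_fun g" and cg: "closed_fun g" and S: "compact S"
  shows "\<exists>m. \<forall>z\<in>S. ereal m \<le> g z"
proof -
  define t where "t z = (if g z = \<infinity> then 0 else real_of_ereal (g z) - 1)" for z
  have tlt: "ereal (t z) < g z" for z
  proof (cases "g z = \<infinity>")
    case True then show ?thesis by (simp add: t_def)
  next
    case False
    moreover have "g z \<noteq> -\<infinity>" using pg by (simp add: proper_fun_def)
    ultimately obtain r where "g z = ereal r" by (cases "g z") auto
    then show ?thesis by (simp add: t_def)
  qed
  have opn: "open (- epigraph_e g)" using cg by (simp add: closed_fun_def closed_def)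
  have "\<exists>e>0. \<forall>w. dist w z < e \<longrightarrow> ereal (t z) < g w" for z
  proof -
    have "(z, t z) \<in> - epigraph_e g" using tlt[of z] by (simp add: epigraph_e_def not_le)
    then obtain e where e: "e > 0" "\<And>y. dist y (z, t z) < e \<Longrightarrow> y \<in> - epigraph_e g"
      using opn unfolding open_dist by blast
    show ?thesis
    proof (intro exI[of _ e] conjI allI impI e(1))
      fix w assume "dist w z < e"
      then have "dist (w, t z) (z, t z) < e" by (simp add: dist_Pair_Pair)
      then have "(w, t z) \<notin> epigraph_e g" using e(2) by blast
      then show "ereal (t z) < g w" by (simp add: epigraph_e_def not_le)
    qed
  qed
  then obtain e where e: "\<And>z. e z > 0" "\<And>z w. dist w z < e z \<Longrightarrow> ereal (t z) < g w"
    by metis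
  have "S \<subseteq> (\<Union>z\<in>S. ball z (e z))" using e(1) by auto
  then obtain C where C: "C \<subseteq> S" "finite C" "S \<subseteq> (\<Union>z\<in>C. ball z (e z))"
    using compactE_image[OF S, of S "\<lambda>z. ball z (e z)"] by auto
  define m where "m = (if C = {} then 0 else Min (t ` C))"
  show ?thesis
  proof (intro exI[of _ m] ballI)
    fix w assume "w \<in> S"
    then obtain z where z: "z \<in> C" "w \<in> ball z (e z)" using C(3) by auto
    then have "m \<le> t z" using C(2) by (auto simp: m_def)
    moreover have "ereal (t z) < g w" using e(2)[of w z] z(2) by (simp add: dist_commute)
    ultimately show "ereal m \<le> g w" by (meson ereal_less_eq(3) less_imp_le order_trans)
  qed
qed

lemma convex_fun_ineq:
  fixes g :: "'a::euclidean_space \<Rightarrow> ereal"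
  assumes cg: "convex_fun g" and z: "g z \<le> ereal a" and w: "g w \<le> ereal b"
    and t: "0 \<le> t" "t \<le> 1"
  shows "g ((1 - t) *\<^sub>R z + t *\<^sub>R w) \<le> ereal ((1 - t) * a + t * b)"
proof -
  have "(z, a) \<in> epigraph_e g" "(w, b) \<in> epigraph_e g" using z w by (auto simp: epigraph_e_def)
  from convexD[OF cg[unfolded convex_fun_def] this, of "1 - t" t] t
  show ?thesis by (simp add: epigraph_e_def)
qed


lemma affine_lb:
  fixes g :: "'a::euclidean_space \<Rightarrow> ereal"
  assumes pg: "proper_fun g" and cg: "closed_fun g" and vg: "convex_fun g"
    and z0: "g z0 = ereal g0"
  shows "\<exists>m C. C \<ge> 0 \<and> (\<forall>z. ereal (m - C * norm (z - z0)) \<le> g z)"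
proof -
  obtain m1 where m1: "\<And>z. z \<in> cball z0 1 \<Longrightarrow> ereal m1 \<le> g z"
    using proper_closed_lb[OF pg cg compact_cball] by blast
  define m where "m = min m1 g0"
  define C where "C = g0 - m"
  have C0: "C \<ge> 0" by (simp add: C_def m_def)
  have "ereal (m - C * norm (z - z0)) \<le> g z" for z
  proof -
    define r where "r = norm (z - z0)"
    show ?thesis
    proof (cases "r \<le> 1")
      case True
      then have "ereal m1 \<le> g z" using m1[of z] by (simp add: r_def dist_norm norm_minus_commute)
      moreover have "m - C * r \<le> m1" using C0 by (simp add: m_def) (smt (verit) norm_ge_zero r_def mult_nonneg_nonneg)
      ultimately show ?thesis unfolding r_def by (meson ereal_less_eq(3) order_trans)
    next
      case False
      then have r1: "r > 1" by simp
      show ?thesis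
      proof (cases "g z = \<infinity>")
        case True then show ?thesis by simp
      next
        case False
        moreover have "g z \<noteq> -\<infinity>" using pg by (simp add: proper_fun_def)
        ultimately obtain a where a: "g z = ereal a" by (cases "g z") auto
        define w where "w = (1 - 1/r) *\<^sub>R z0 + (1/r) *\<^sub>R z"
        have "w - z0 = (1/r) *\<^sub>R (z - z0)" by (simp add: w_def algebra_simps)
        then have "norm (w - z0) = 1" using r1 by (auto simp: r_def)
        then have "ereal m1 \<le> g w" using m1[of w] by (simp add: dist_norm norm_minus_commute)
        also have "g w \<le> ereal ((1 - 1/r) * g0 + (1/r) * a)"
          unfolding w_def by (rule convex_fun_ineq[OF vg]) (use z0 a r1 in auto)
        finally have "m1 \<le> (1 - 1/r) * g0 + (1/r) * a" by simp
        then have "m \<le> (1 - 1/r) * g0 + (1/r) * a" by (simp add: m_def)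
        then have "r * m \<le> r * ((1 - 1/r) * g0 + (1/r) * a)" using r1 by simp
        also have "\<dots> = (r - 1) * g0 + a" using r1 by (simp add: field_simps)
        finally have "a \<ge> r * m - (r - 1) * g0" by simp
        moreover have "r * m - (r - 1) * g0 \<ge> m - C * r"
          by (simp add: C_def algebra_simps m_def)
        ultimately show ?thesis using a by (simp add: r_def)
      qed
    qed
  qed
  then show ?thesis using C0 by blast
qed


lemma quad_bound:
  fixes r R c C B q :: real
  assumes "c > 0" "C \<ge> 0" "R = 8 * c * C + 4 * B + 4" "B \<ge> q" "B \<ge> 0" "r > R"
  shows "r^2 / 4 - c * C * r > q"
proof -
  have cC: "c * C \<ge> 0" using assms by simp
  have r0: "r \<ge> 0" "r \<ge> 8 * (c * C)" "r \<ge> 4 * B + 4" using assms cC by linarith+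
  have "c * C * r \<le> r * r / 8" using r0 mult_right_mono[OF r0(2) r0(1)] by (simp add: field_simps)
  moreover have "r * r / 8 \<ge> r * (4 * B + 4) / 8" using r0 mult_left_mono[OF r0(3) r0(1)] by simp
  moreover have "r * (4 * B + 4) / 8 \<ge> 4 * (4 * B + 4) / 8"
    using assms r0 by (intro divide_right_mono mult_right_mono) auto
  ultimately show ?thesis using assms by (simp add: power2_eq_square)
qed

lemma prox_exists:
  fixes g :: "'a::euclidean_space \<Rightarrow> ereal"
  assumes pg: "proper_fun g" and cg: "closed_fun g" and vg: "convex_fun g" and c: "c > 0"
  shows "\<exists>p. \<forall>z. ereal c * g p + ereal (1/2 * (norm (p - v))\<^sup>2) \<le> ereal c * g z + ereal (1/2 * (norm (z - v))\<^sup>2)"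
proof -
  obtain z0 where "g z0 < \<infinity>" using pg by (auto simp: proper_fun_def)
  moreover have "g z0 \<noteq> -\<infinity>" using pg by (simp add: proper_fun_def)
  ultimately obtain g0 where g0: "g z0 = ereal g0" by (cases "g z0") auto
  obtain m C where C0: "C \<ge> 0" and mC: "\<And>z. ereal (m - C * norm (z - z0)) \<le> g z"
    using affine_lb[OF pg cg vg g0] by blast
  define d where "d = norm (z0 - v)"
  define \<Phi>0 where "\<Phi>0 = c * g0 + 1/2 * d^2"
  define B where "B = \<bar>\<Phi>0 - c * m + d^2 / 2\<bar>"
  define R where "R = 8 * c * C + 4 * B + 4"
  define T where "T = \<Phi>0 / c"
  define h where "h = (\<lambda>q::'a \<times> real. c * snd q + 1/2 * (norm (fst q - v))\<^sup>2)"
  define K where "K = epigraph_e g \<inter> {q. norm (fst q - z0) \<le> R \<and> snd q \<le> T}"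
  have lbz: "m - C * norm (z - z0) \<le> a" if "g z = ereal a" for z a using mC[of z] that by simp
  have big: "\<Phi>0 < c * a + 1/2 * (norm (z - v))\<^sup>2" if a: "g z = ereal a" and out: "norm (z - z0) > R \<or> a > T" for z a
  proof (cases "a > T")
    case True
    then have "c * a > \<Phi>0" using c by (simp add: T_def field_simps)
    moreover have "0 \<le> 1/2 * (norm (z - v))\<^sup>2" by simp
    ultimately show ?thesis by linarith
  next
    case False
    define r where "r = norm (z - z0)"
    have rR: "r > R" using out False by (simp add: r_def)
    have "z - z0 = (z - v) + (v - z0)" by simp
    then have "norm (z - z0) \<le> norm (z - v) + norm (v - z0)" by (metis norm_triangle_ineq)
    then have "r \<le> norm (z - v) + d" unfolding r_def d_def by (simp add: norm_minus_commute)
    then have "r^2 \<le> (norm (z - v) + d)^2" by (intro power_mono) (auto simp: r_def)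
    moreover have "0 \<le> (norm (z - v) - d)^2" by simp
    ultimately have "r^2 \<le> 2 * (norm (z - v))^2 + 2 * d^2"
      unfolding power2_sum power2_diff by linarith
    then have q1: "1/2 * (norm (z - v))\<^sup>2 \<ge> r^2 / 4 - d^2 / 2" by simp
    have q2: "c * a \<ge> c * (m - C * r)" using lbz[OF a] c by (simp add: r_def)
    have "r^2 / 4 - c * C * r > \<Phi>0 - c * m + d^2 / 2"
      by (rule quad_bound[OF c C0 R_def]) (use rR in \<open>auto simp: B_def\<close>)
    then show ?thesis using q1 q2 by (simp add: algebra_simps)
  qed
  have clK: "closed K" unfolding K_def
    using cg unfolding closed_fun_def
    by (intro closed_Int closed_Collect_conj closed_Collect_le) (auto intro!: continuous_intros)
  have "K \<subseteq> cball z0 R \<times> {m - C * R .. T}"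
  proof
    fix q assume q: "q \<in> K"
    obtain z s where qz: "q = (z, s)" by fastforce
    have "g z \<le> ereal s" "norm (z - z0) \<le> R" "s \<le> T" using q by (auto simp: K_def qz epigraph_e_def)
    moreover have "ereal (m - C * norm (z - z0)) \<le> ereal s" using mC[of z] calculation(1) by (rule order_trans)
    moreover have "C * norm (z - z0) \<le> C * R" using C0 calculation(2) by (simp add: mult_left_mono)
    ultimately have "m - C * R \<le> s" by simp
    then show "q \<in> cball z0 R \<times> {m - C * R .. T}"
      using \<open>norm (z - z0) \<le> R\<close> \<open>s \<le> T\<close> by (simp add: qz dist_norm norm_minus_commute)
  qed
  then have bK: "bounded K" by (rule bounded_subset[OF bounded_Times[OF bounded_cball bounded_closed_interval]])
  have cK: "compact K" using clK bK by (simp add: compact_eq_bounded_closed)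
  have z0K: "(z0, g0) \<in> K"
  proof -
    have "c * g0 \<le> \<Phi>0" by (simp add: \<Phi>0_def)
    then have "g0 \<le> T" using c by (simp add: T_def field_simps)
    moreover have "0 \<le> R" using c C0 by (simp add: R_def B_def)
    ultimately show ?thesis by (simp add: K_def epigraph_e_def g0)
  qed
  have "continuous_on K h" unfolding h_def by (auto intro!: continuous_intros)
  then obtain q where qK: "q \<in> K" and qmin: "\<And>y. y \<in> K \<Longrightarrow> h q \<le> h y"
    using continuous_attains_inf[OF cK _ , of h] z0K by blast
  obtain p s where qps: "q = (p, s)" by fastforce
  have gps: "g p \<le> ereal s" using qK by (simp add: qps K_def epigraph_e_def)
  have hq0: "h q \<le> \<Phi>0" using qmin[OF z0K] by (simp add: h_def \<Phi>0_def d_def)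
  have lhs: "ereal c * g p + ereal (1/2 * (norm (p - v))\<^sup>2) \<le> ereal (h q)"
  proof -
    have "ereal c * g p \<le> ereal c * ereal s" using gps c by (intro ereal_mult_left_mono) auto
    then have "ereal c * g p + ereal (1/2 * (norm (p - v))\<^sup>2) \<le> ereal (c * s) + ereal (1/2 * (norm (p - v))\<^sup>2)"
      by (intro add_right_mono) simp
    then show ?thesis by (simp add: h_def qps)
  qed
  show ?thesis
  proof (intro exI[of _ p] allI)
    fix z
    show "ereal c * g p + ereal (1/2 * (norm (p - v))\<^sup>2) \<le> ereal c * g z + ereal (1/2 * (norm (z - v))\<^sup>2)"
    proof (cases "g z = \<infinity>")
      case True then show ?thesis using c by simp
    next
      case False
      moreover have "g z \<noteq> -\<infinity>" using pg by (simp add: proper_fun_def)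
      ultimately obtain a where a: "g z = ereal a" by (cases "g z") auto
      have "h q \<le> c * a + 1/2 * (norm (z - v))\<^sup>2"
      proof (cases "(z, a) \<in> K")
        case True then show ?thesis using qmin[of "(z,a)"] by (simp add: h_def)
      next
        case False
        then have "norm (z - z0) > R \<or> a > T" using a by (auto simp: K_def epigraph_e_def)
        then show ?thesis using big[OF a] hq0 by linarith
      qed
      then show ?thesis using lhs a by (simp add: order_trans)
    qed
  qed
qed


lemma small_t_nonneg:
  fixes A E :: real
  assumes h: "\<And>t. 0 < t \<Longrightarrow> t \<le> 1 \<Longrightarrow> 0 \<le> A + t * E"
  shows "0 \<le> A"
proof (rule ccontr)
  assume A: "\<not> 0 \<le> A"
  show False
  proof (cases "E \<le> 0")
    case True
    then show False using h[of 1] A by simp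
  next
    case False
    define t where "t = min 1 (- A / (2 * E))"
    have "- A / (2 * E) > 0" using A False by (intro divide_pos_pos) auto
    then have t0: "0 < t" "t \<le> 1" by (auto simp: t_def)
    have "t * E \<le> (- A / (2 * E)) * E" using False by (intro mult_right_mono) (auto simp: t_def)
    also have "\<dots> = - A / 2" using False by (simp add: field_simps)
    finally show False using h[OF t0] A by simp
  qed
qed

lemma norm_add_scale_sq:
  fixes x y :: "'a::real_inner"
  shows "(norm (x + t *\<^sub>R y))\<^sup>2 = (norm x)\<^sup>2 + 2 * t * (x \<bullet> y) + t\<^sup>2 * (norm y)\<^sup>2"
  unfolding power2_norm_eq_inner
  by (simp add: inner_add_left inner_add_right inner_commute power2_eq_square algebra_simps)

lemma pos_mult_nonneg: "0 < (t::real) \<Longrightarrow> 0 \<le> t * q \<Longrightarrow> 0 \<le> q"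
  by (simp add: zero_le_mult_iff)

lemma prox_ineq:
  fixes g :: "'a::euclidean_space \<Rightarrow> ereal"
  assumes vg: "convex_fun g" and c: "c > 0"
    and pmin: "\<And>z. ereal c * g p + ereal (1/2 * (norm (p - v))\<^sup>2) \<le> ereal c * g z + ereal (1/2 * (norm (z - v))\<^sup>2)"
    and gp: "g p = ereal a" and gz: "g z = ereal b"
  shows "c * a \<le> c * b + (p - v) \<bullet> (z - p)"
proof -
  define w where "w = (p - v) \<bullet> (z - p)"
  define D where "D = (norm (z - p))\<^sup>2"
  have "0 \<le> (c * b - c * a + w) + t * (D / 2)" if t: "0 < t" "t \<le> 1" for t
  proof -
    define zt where "zt = (1 - t) *\<^sub>R p + t *\<^sub>R z"
    have gzt: "g zt \<le> ereal ((1 - t) * a + t * b)"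
      unfolding zt_def by (rule convex_fun_ineq[OF vg]) (use gp gz t in auto)
    have "ereal c * g zt \<le> ereal c * ereal ((1 - t) * a + t * b)"
      using gzt c by (intro ereal_mult_left_mono) auto
    then have "ereal c * g zt + ereal (1/2 * (norm (zt - v))\<^sup>2) \<le> ereal (c * ((1 - t) * a + t * b)) + ereal (1/2 * (norm (zt - v))\<^sup>2)"
      by (intro add_right_mono) simp
    from order_trans[OF pmin[of zt] this]
    have ineq: "c * a + 1/2 * (norm (p - v))\<^sup>2 \<le> c * ((1 - t) * a + t * b) + 1/2 * (norm (zt - v))\<^sup>2"
      using gp by simp
    have "zt - v = (p - v) + t *\<^sub>R (z - p)" by (simp add: zt_def algebra_simps)
    then have eq: "(norm (zt - v))\<^sup>2 = (norm (p - v))\<^sup>2 + 2 * t * w + t\<^sup>2 * D"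
      unfolding w_def D_def by (metis norm_add_scale_sq)
    have "t * ((c * b - c * a + w) + t * (D / 2)) = (c * ((1 - t) * a + t * b)
        + 1/2 * (norm (zt - v))\<^sup>2) - (c * a + 1/2 * (norm (p - v))\<^sup>2)"
      unfolding eq by (simp add: algebra_simps power2_eq_square)
    then have "0 \<le> t * ((c * b - c * a + w) + t * (D / 2))"
      using ineq by linarith
    then show ?thesis by (rule pos_mult_nonneg[OF t(1)])
  qed
  then have "0 \<le> c * b - c * a + w" by (rule small_t_nonneg)
  then show ?thesis by (simp add: w_def)
qed


lemma prox_min:
  fixes g :: "'a::euclidean_space \<Rightarrow> ereal"
  assumes pg: "proper_fun g" and cg: "closed_fun g" and vg: "convex_fun g" and c: "c > 0"
  shows "ereal c * g (prox (\<lambda>z. ereal c * g z) v) + ereal (1/2 * (norm (prox (\<lambda>z. ereal c * g z) v - v))\<^sup>2)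
           \<le> ereal c * g z + ereal (1/2 * (norm (z - v))\<^sup>2)"
proof -
  have "\<forall>z. ereal c * g (prox (\<lambda>z. ereal c * g z) v) + ereal (1/2 * (norm (prox (\<lambda>z. ereal c * g z) v - v))\<^sup>2)
           \<le> ereal c * g z + ereal (1/2 * (norm (z - v))\<^sup>2)"
    unfolding prox_def by (rule someI_ex[OF prox_exists[OF pg cg vg c]])
  then show ?thesis by blast
qed

lemma step_real:
  fixes a b L l W Gzp F1p F1y G1py Npy F2y G2py F2p G1zy F1z F2z G2zy Nzy Nzp :: real
  assumes "a \<le> b + L * W + Gzp" "F1p \<le> F1y + G1py + L / 2 * Npy" "F2y + G2py \<le> F2p"
    "F1y + G1zy \<le> F1z" "F2z \<le> F2y + G2zy + l / 2 * Nzy"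
    "Gzp = G1zy - G1py - G2zy + G2py" "Nzy = Nzp + 2 * W + Npy"
  shows "F1p - F2p + a \<le> F1z - F2z + b + (L + l) / 2 * Nzy - L / 2 * Nzp"
proof -
  have "L / 2 * Nzy = L / 2 * Nzp + L * W + L / 2 * Npy" using assms(7) by (simp add: algebra_simps)
  moreover have "(L + l) / 2 * Nzy = L / 2 * Nzy + l / 2 * Nzy" by (simp add: algebra_simps)
  ultimately show ?thesis using assms(1-6) by linarith
qed

lemma step_ineq:
  fixes p y z G1 G2 :: "'a::real_inner"
  assumes h1: "a \<le> b + L * ((p - y) \<bullet> (z - p)) + (G1 - G2) \<bullet> (z - p)"
    and h2: "F1p \<le> F1y + G1 \<bullet> (p - y) + L / 2 * (norm (p - y))\<^sup>2"
    and h3: "F2y + G2 \<bullet> (p - y) \<le> F2p"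
    and h4: "F1y + G1 \<bullet> (z - y) \<le> F1z"
    and h5: "F2z \<le> F2y + G2 \<bullet> (z - y) + l / 2 * (norm (z - y))\<^sup>2"
  shows "F1p - F2p + a \<le> F1z - F2z + b + (L + l) / 2 * (norm (z - y))\<^sup>2 - L / 2 * (norm (z - p))\<^sup>2"
proof -
  have e1: "(G1 - G2) \<bullet> (z - p) = G1 \<bullet> (z - y) - G1 \<bullet> (p - y) - G2 \<bullet> (z - y) + G2 \<bullet> (p - y)"
    by (simp add: inner_diff_left inner_diff_right)
  have "z - y = (z - p) + (p - y)" by simp
  then have e2: "(norm (z - y))\<^sup>2 = (norm (z - p))\<^sup>2 + 2 * ((p - y) \<bullet> (z - p)) + (norm (p - y))\<^sup>2"
    by (metis (no_types, lifting) power2_norm_eq_inner inner_add_left inner_add_right inner_commute mult_2 add.assoc)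
  show ?thesis by (rule step_real[OF h1 h2 h3 h4 h5 e1 e2])
qed

theorem lemma3p3:
  fixes g :: "'a::euclidean_space \<Rightarrow> ereal"
    and f1 f2 :: "'a \<Rightarrow> real"
    and f1' f2' :: "'a \<Rightarrow> 'a"
    and L l \<alpha> :: real
    and \<beta> :: "nat \<Rightarrow> real"
    and x :: "nat \<Rightarrow> 'a"
  assumes g_pcc: "proper_fun g" "closed_fun g" "convex_fun g"
    and f1_convex: "convex_on UNIV f1" and f2_convex: "convex_on UNIV f2"
    and f1_grad: "\<And>z. (f1 has_derivative (\<lambda>h. f1' z \<bullet> h)) (at z)"
    and f2_grad: "\<And>z. (f2 has_derivative (\<lambda>h. f2' z \<bullet> h)) (at z)"
    and L_pos: "L > 0" and l_nonneg: "l \<ge> 0" and Ll: "L \<ge> l"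
    and f1_lip: "L-lipschitz_on UNIV f1'"
    and f2_lip: "l-lipschitz_on UNIV f2'"
    and F_inf: "(INF z. ereal (f1 z - f2 z) + g z) > -\<infinity>"
    and F_attained: "\<exists>zs. \<forall>z. ereal (f1 zs - f2 zs) + g zs \<le> ereal (f1 z - f2 z) + g z"
    and x0_dom: "g (x 0) < \<infinity>"
    and \<beta>_range: "\<And>k. 0 \<le> \<beta> k \<and> \<beta> k \<le> sqrt (L / (L + l))"
    and x_iter: "\<And>k. x (Suc k) =
        prox (\<lambda>z. ereal (1 / L) * g z)
          ((x k + \<beta> k *\<^sub>R (x k - x (k - 1)))
           - (1 / L) *\<^sub>R (f1' (x k + \<beta> k *\<^sub>R (x k - x (k - 1)))
                          - f2' (x k + \<beta> k *\<^sub>R (x k - x (k - 1)))))"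
    and \<alpha>_range: "(L + l) / 2 * (SUP k. \<beta> k)\<^sup>2 \<le> \<alpha>" "\<alpha> \<le> L / 2"
  shows "(\<exists>c::real. (\<lambda>k. ereal (f1 (x k) - f2 (x k)) + g (x k)
                          + ereal (\<alpha> * (norm (x k - x (k - 1)))\<^sup>2)) \<longlonglongrightarrow> ereal c)
       \<and> summable (\<lambda>k. (\<alpha> - (L + l) / 2 * (\<beta> (Suc k))\<^sup>2) * (norm (x (Suc k) - x k))\<^sup>2)"
proof -
  define c where "c = 1 / L"
  have c0: "c > 0" using L_pos by (simp add: c_def)
  define fa where "fa = (\<lambda>z. f1 z - f2 z)"
  define y where "y = (\<lambda>k. x k + \<beta> k *\<^sub>R (x k - x (k - 1)))"
  define v where "v = (\<lambda>k. y k - (1 / L) *\<^sub>R (f1' (y k) - f2' (y k)))"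
  have xs: "x (Suc k) = prox (\<lambda>z. ereal c * g z) (v k)" for k
    using x_iter[of k] by (simp add: c_def v_def y_def)
  have pm: "ereal c * g (x (Suc k)) + ereal (1/2 * (norm (x (Suc k) - v k))\<^sup>2)
           \<le> ereal c * g z + ereal (1/2 * (norm (z - v k))\<^sup>2)" for k z
    unfolding xs by (rule prox_min[OF g_pcc c0])
  have ninf: "g z \<noteq> -\<infinity>" for z using g_pcc(1) by (simp add: proper_fun_def)
  have fin: "g (x k) < \<infinity>" for k
  proof (induction k)
    case 0 then show ?case using x0_dom by simp
  next
    case (Suc k)
    have "ereal c * g (x (Suc k)) + ereal (1/2 * (norm (x (Suc k) - v k))\<^sup>2) < \<infinity>"
      using pm[of k "x k"] Suc ninf[of "x k"] by (cases "g (x k)") auto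
    then show ?case using c0 ninf[of "x (Suc k)"] by (cases "g (x (Suc k))") auto
  qed
  define gr where "gr = (\<lambda>k. real_of_ereal (g (x k)))"
  have ggr: "g (x k) = ereal (gr k)" for k
    using fin[of k] ninf[of "x k"] by (cases "g (x k)") (auto simp: gr_def)
  define h where "h = (\<lambda>k. fa (x k) + gr k + \<alpha> * (norm (x k - x (k - 1)))\<^sup>2)"
  have Fstep: "fa (x (Suc k)) + gr (Suc k) \<le> fa (x k) + gr k
      + (L + l) / 2 * (norm (x k - y k))\<^sup>2 - L / 2 * (norm (x k - x (Suc k)))\<^sup>2" for k
  proof -
    let ?p = "x (Suc k)" and ?z = "x k" and ?y = "y k"
    have pmin: "\<And>z. ereal c * g ?p + ereal (1/2 * (norm (?p - v k))\<^sup>2) \<le> ereal c * g z + ereal (1/2 * (norm (z - v k))\<^sup>2)"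
      by (rule pm)
    have pi: "c * gr (Suc k) \<le> c * gr k + (?p - v k) \<bullet> (?z - ?p)"
      by (rule prox_ineq[OF g_pcc(3) c0 pmin ggr ggr])
    have eqv: "?p - v k = (?p - ?y) + c *\<^sub>R (f1' ?y - f2' ?y)" by (simp add: v_def c_def)
    have "(?p - v k) \<bullet> (?z - ?p) = (?p - ?y) \<bullet> (?z - ?p) + c * ((f1' ?y - f2' ?y) \<bullet> (?z - ?p))"
      unfolding eqv inner_add_left inner_scaleR_left ..
    with pi have "c * gr (Suc k) \<le> c * (gr k + L * ((?p - ?y) \<bullet> (?z - ?p)) + (f1' ?y - f2' ?y) \<bullet> (?z - ?p))"
      using L_pos by (simp add: c_def field_simps)
    then have h1: "gr (Suc k) \<le> gr k + L * ((?p - ?y) \<bullet> (?z - ?p)) + (f1' ?y - f2' ?y) \<bullet> (?z - ?p)"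
      using c0 by simp
    show ?thesis unfolding fa_def
      by (rule step_ineq[OF h1 descent_lemma[OF f1_grad f1_lip] convex_grad_ineq[OF f2_convex f2_grad]
            convex_grad_ineq[OF f1_convex f1_grad] descent_lemma[OF f2_grad f2_lip]])
  qed
  have bdd: "bdd_above (range \<beta>)"
    using \<beta>_range by (intro bdd_aboveI[of _ "sqrt (L / (L + l))"]) auto
  have bsq: "(L + l) / 2 * (\<beta> k)\<^sup>2 \<le> \<alpha>" for k
  proof -
    have "\<beta> k \<le> (SUP k. \<beta> k)" using bdd by (rule cSUP_upper[OF UNIV_I])
    then have "(\<beta> k)\<^sup>2 \<le> (SUP k. \<beta> k)\<^sup>2" using \<beta>_range[of k] by (intro power_mono) auto
    then have "(L + l) / 2 * (\<beta> k)\<^sup>2 \<le> (L + l) / 2 * (SUP k. \<beta> k)\<^sup>2"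
      using L_pos l_nonneg by (intro mult_left_mono) auto
    then show ?thesis using \<alpha>_range(1) by linarith
  qed
  have \<alpha>0: "\<alpha> \<ge> 0" using bsq[of 0] L_pos l_nonneg
    by (smt (verit) zero_le_power2 mult_nonneg_nonneg divide_nonneg_nonneg)
  have hstep: "h (Suc k) \<le> h k - (\<alpha> - (L + l) / 2 * (\<beta> k)\<^sup>2) * (norm (x k - x (k - 1)))\<^sup>2" for k
  proof -
    have ny: "norm (x k - y k) = \<bar>\<beta> k\<bar> * norm (x k - x (k - 1))" by (simp add: y_def)
    have "(norm (x k - y k))\<^sup>2 = (\<beta> k)\<^sup>2 * (norm (x k - x (k - 1)))\<^sup>2"
      unfolding ny by (simp add: power_mult_distrib)
    moreover have "norm (x k - x (Suc k)) = norm (x (Suc k) - x k)" by (rule norm_minus_commute)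
    moreover have "\<alpha> * (norm (x (Suc k) - x k))\<^sup>2 \<le> L / 2 * (norm (x (Suc k) - x k))\<^sup>2"
      using \<alpha>_range(2) by (intro mult_right_mono) auto
    ultimately show ?thesis using Fstep[of k] by (simp add: h_def algebra_simps)
  qed
  have dec: "h (Suc k) \<le> h k" for k
  proof -
    have "0 \<le> (\<alpha> - (L + l) / 2 * (\<beta> k)\<^sup>2) * (norm (x k - x (k - 1)))\<^sup>2"
      using bsq[of k] by simp
    then show ?thesis using hstep[of k] by linarith
  qed
  define I where "I = (INF z. ereal (f1 z - f2 z) + g z)"
  have Ile: "I \<le> ereal (fa (x k) + gr k)" for k
  proof -
    have "I \<le> ereal (f1 (x k) - f2 (x k)) + g (x k)" unfolding I_def by (rule INF_lower) simp
    then show ?thesis by (simp add: ggr fa_def)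
  qed
  have "I \<noteq> -\<infinity>" using F_inf by (simp add: I_def)
  moreover have "I \<noteq> \<infinity>" using Ile[of 0] by auto
  ultimately obtain Ir where Ir: "I = ereal Ir" by (cases I) auto
  have hlb: "Ir \<le> h k" for k
  proof -
    have "Ir \<le> fa (x k) + gr k" using Ile[of k] by (simp add: Ir)
    moreover have "0 \<le> \<alpha> * (norm (x k - x (k - 1)))\<^sup>2" using \<alpha>0 by simp
    ultimately show ?thesis by (simp add: h_def)
  qed
  have "decseq h" using dec by (simp add: decseq_Suc_iff)
  then obtain hl where hl: "h \<longlonglongrightarrow> hl" using hlb by (metis decseq_convergent)
  have part1: "(\<lambda>k. ereal (f1 (x k) - f2 (x k)) + g (x k) + ereal (\<alpha> * (norm (x k - x (k - 1)))\<^sup>2)) \<longlonglongrightarrow> ereal hl"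
  proof -
    have "(\<lambda>k. ereal (f1 (x k) - f2 (x k)) + g (x k) + ereal (\<alpha> * (norm (x k - x (k - 1)))\<^sup>2)) = (\<lambda>k. ereal (h k))"
      by (simp add: ggr h_def fa_def)
    then show ?thesis using hl by (simp add: lim_ereal)
  qed
  have part2: "summable (\<lambda>k. (\<alpha> - (L + l) / 2 * (\<beta> (Suc k))\<^sup>2) * (norm (x (Suc k) - x k))\<^sup>2)"
  proof (rule summable_comparison_test')
    have "(\<lambda>k. h (Suc k)) \<longlonglongrightarrow> hl" using hl by (rule LIMSEQ_Suc)
    then show "summable (\<lambda>k. h (Suc k) - h (Suc (Suc k)))" by (rule telescope_summable')
  next
    fix k :: nat assume "k \<ge> 0"
    have "0 \<le> (\<alpha> - (L + l) / 2 * (\<beta> (Suc k))\<^sup>2) * (norm (x (Suc k) - x k))\<^sup>2"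
      using bsq[of "Suc k"] by simp
    moreover have "(\<alpha> - (L + l) / 2 * (\<beta> (Suc k))\<^sup>2) * (norm (x (Suc k) - x k))\<^sup>2 \<le> h (Suc k) - h (Suc (Suc k))"
      using hstep[of "Suc k"] by simp
    ultimately show "norm ((\<alpha> - (L + l) / 2 * (\<beta> (Suc k))\<^sup>2) * (norm (x (Suc k) - x k))\<^sup>2) \<le> h (Suc k) - h (Suc (Suc k))"
      by simp
  qed
  show ?thesis using part1 part2 by blast
qed

end
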